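(* Let $k\ge 2$ and $n>t\geq 1$ be integers. Then the number $B_k(n,t)$ of length-$n$ words over $\Sigma_k$ that have a unique border, this border having length $t$, satisfies \[ B_k(n,t)=\begin{cases} 0, & \text{if } n<2t;\\ u_t k^{n-2t}-\sum_{i=2t}^{\lfloor n/2\rfloor}B_k(i,t)k^{n-2i}, & \text{if } n\ge 2t \text{ and } n+t \text{ is odd};\\ u_t k^{n-2t}-B_k\!\left(\tfrac{n+t}{2},t\right)-\sum_{i=2t}^{\lfloor n/2\rfloor}B_k(i,t)k^{n-2i}, & \text{if } n\ge 2t \text{ and } n+t \text{ is even}. \end{cases} \]
   Context: $\Sigma_k=\{0,1,\ldots,k-1\}$. A border of a word $w$ is a non-empty word that is both a proper prefix and a proper suffix of $w$; $w$ is unbordered if it has no border. A word has a unique border if it has exactly one border. $u_t$ denotes the number of unbordered words of length $t$ over $\Sigma_k$ (with $u_0=1$, $u_n=ku_{n-1}-u_{n/2}$ for even $n>0$, $u_n=ku_{n-1}$ for odd $n$). An empty sum is zero. *)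

theory Defs
  imports Main "HOL-Library.Sublist"
begin

definition words :: "nat \<Rightarrow> nat \<Rightarrow> nat list set" where
  "words k n = {w. length w = n \<and> set w \<subseteq> {..<k}}"

definition is_border :: "'a list \<Rightarrow> 'a list \<Rightarrow> bool" where
  "is_border v w \<longleftrightarrow> v \<noteq> [] \<and> strict_prefix v w \<and> strict_suffix v w"

definition unbordered :: "'a list \<Rightarrow> bool" where
  "unbordered w \<longleftrightarrow> \<not> (\<exists>v. is_border v w)"

definition u :: "nat \<Rightarrow> nat \<Rightarrow> nat" where
  "u k t = card {w \<in> words k t. unbordered w}"

definition unique_border_len :: "'a list \<Rightarrow> nat \<Rightarrow> bool" where
  "unique_border_len w t \<longleftrightarrow> (\<exists>v. {v'. is_border v' w} = {v} \<and> length v = t)"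

definition B :: "nat \<Rightarrow> nat \<Rightarrow> nat \<Rightarrow> nat" where
  "B k n t = card {w \<in> words k n. unique_border_len w t}"

end

theory Submission
  imports Defs
begin


definition hb :: "'a list \<Rightarrow> nat \<Rightarrow> bool" where
  "hb w l \<longleftrightarrow> 0 < l \<and> l < length w \<and> take l w = drop (length w - l) w"

definition ub :: "'a list \<Rightarrow> nat \<Rightarrow> bool" where
  "ub w t \<longleftrightarrow> hb w t \<and> (\<forall>j. hb w j \<longrightarrow> j = t)"

lemma prefix_take_iff: "prefix v w \<longleftrightarrow> length v \<le> length w \<and> v = take (length v) w"
proof
  assume "prefix v w"
  then obtain zs where "w = v @ zs" unfolding prefix_def by auto
  then show "length v \<le> length w \<and> v = take (length v) w" by simp
next
  assume a: "length v \<le> length w \<and> v = take (length v) w"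
  then have "w = v @ drop (length v) w" by (metis append_take_drop_id)
  then show "prefix v w" unfolding prefix_def by blast
qed

lemma suffix_drop_iff: "suffix v w \<longleftrightarrow> length v \<le> length w \<and> v = drop (length w - length v) w"
proof
  assume "suffix v w"
  then obtain zs where "w = zs @ v" unfolding suffix_def by auto
  then show "length v \<le> length w \<and> v = drop (length w - length v) w" by simp
next
  assume a: "length v \<le> length w \<and> v = drop (length w - length v) w"
  then have "w = take (length w - length v) w @ v" by (metis append_take_drop_id)
  then show "suffix v w" unfolding suffix_def by blast
qed

lemma is_border_hb: "is_border v w \<longleftrightarrow> hb w (length v) \<and> v = take (length v) w"
proof
  assume "is_border v w"
  then have a: "v \<noteq> []" "prefix v w" "v \<noteq> w" "suffix v w"
    unfolding is_border_def strict_prefix_def strict_suffix_def by auto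
  then have "length v < length w"
  proof -
    have "length v \<le> length w" "v = take (length v) w" using a prefix_take_iff[of v w] by auto
    moreover have "length v \<noteq> length w" using calculation a(3) by auto
    ultimately show ?thesis by simp
  qed
  then show "hb w (length v) \<and> v = take (length v) w"
    using a prefix_take_iff[of v w] suffix_drop_iff[of v w] unfolding hb_def by auto
next
  assume a: "hb w (length v) \<and> v = take (length v) w"
  then have b: "length v < length w" "0 < length v" "v = drop (length w - length v) w" unfolding hb_def by auto
  then show "is_border v w"
    unfolding is_border_def strict_prefix_def strict_suffix_def
    using a prefix_take_iff[of v w] suffix_drop_iff[of v w] by auto
qed

lemma unbordered_hb: "unbordered w \<longleftrightarrow> (\<forall>j. \<not> hb w j)"
proof -
  have e: "(\<exists>v. hb w (length v) \<and> v = take (length v) w) \<longleftrightarrow> (\<exists>j. hb w j)"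
  proof
    assume "\<exists>j. hb w j"
    then obtain j where j: "hb w j" by auto
    then have "length (take j w) = j" unfolding hb_def by simp
    then show "\<exists>v. hb w (length v) \<and> v = take (length v) w" using j by metis
  qed auto
  show ?thesis unfolding unbordered_def is_border_hb using e by blast
qed

lemma ubl_ub: "unique_border_len w t \<longleftrightarrow> ub w t"
proof
  assume "unique_border_len w t"
  then obtain v where v: "{v'. is_border v' w} = {v}" "length v = t" unfolding unique_border_len_def by auto
  have vb: "is_border v w" using v(1) by (metis insertI1 mem_Collect_eq)
  have h1: "hb w t" using vb v(2) is_border_hb[of v w] by simp
  have "j = t" if hj: "hb w j" for j
  proof -
    have lj: "length (take j w) = j" using hj unfolding hb_def by simp
    have "is_border (take j w) w" using hj lj is_border_hb[of "take j w" w] by simp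
    then have "take j w \<in> {v'. is_border v' w}" by simp
    then have "take j w = v" using v(1) by simp
    then show ?thesis using lj v(2) by simp
  qed
  then show "ub w t" using h1 unfolding ub_def by blast
next
  assume a: "ub w t"
  have lt: "length (take t w) = t" using a unfolding ub_def hb_def by simp
  have "{v'. is_border v' w} = {take t w}"
  proof (rule set_eqI, rule iffI)
    fix v' assume "v' \<in> {v'. is_border v' w}"
    then have "is_border v' w" by simp
    then have "hb w (length v')" "v' = take (length v') w" using is_border_hb[of v' w] by simp_all
    moreover then have "length v' = t" using a unfolding ub_def by blast
    ultimately show "v' \<in> {take t w}" by simp
  next
    fix v' assume "v' \<in> {take t w}"
    then have "v' = take t w" by simp
    moreover have "is_border (take t w) w" using a lt is_border_hb[of "take t w" w] unfolding ub_def by simp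
    ultimately show "v' \<in> {v'. is_border v' w}" by simp
  qed
  then show "unique_border_len w t" unfolding unique_border_len_def using lt by blast
qed

lemma hb_take: assumes "hb w l" shows "hb (take l w) j \<longleftrightarrow> hb w j \<and> j < l"
proof -
  let ?n = "length w"
  have l: "0 < l" "l < ?n" "take l w = drop (?n - l) w" using assms unfolding hb_def by auto
  have e1: "drop (l - j) (take l w) = drop (?n - j) w" if "j < l"
  proof -
    have "drop (l - j) (take l w) = drop (l - j) (drop (?n - l) w)" using l by simp
    also have "\<dots> = drop (?n - j) w" using l that by (simp add: add.commute)
    finally show ?thesis .
  qed
  have e2: "take j (take l w) = take j w" if "j < l" using that by simp
  have e3: "length (take l w) = l" using l by simp
  note eqs = e1 e2 e3
  show ?thesis
  proof
    assume h: "hb (take l w) j"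
    then have j: "0 < j" "j < l" "take j (take l w) = drop (l - j) (take l w)"
      using eqs(3) unfolding hb_def by auto
    then show "hb w j \<and> j < l" using eqs(1,2) l unfolding hb_def by auto
  next
    assume h: "hb w j \<and> j < l"
    then have j: "0 < j" "j < l" "take j w = drop (?n - j) w" unfolding hb_def by auto
    then show "hb (take l w) j" using eqs j unfolding hb_def by auto
  qed
qed

lemma hb_overlap: assumes "hb w l" "length w < 2*l" shows "hb w (2*l - length w)"
proof -
  let ?n = "length w"
  have l: "0 < l" "l < ?n" "take l w = drop (?n - l) w" using assms unfolding hb_def by auto
  have e: "2*l - ?n + (?n - l) = l" using l assms(2) by simp
  have "drop (?n - l) (take l w) = take (2*l - ?n) (drop (?n - l) w)"
    using take_drop[of "2*l - ?n" "?n - l" w] e by simp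
  also have "\<dots> = take (2*l - ?n) (take l w)" using l by simp
  finally have "take (2*l - ?n) (take l w) = drop (?n - l) (take l w)" by simp
  then have "hb (take l w) (2*l - ?n)" using l assms(2) unfolding hb_def by (simp add: min_def)
  then show ?thesis using hb_take[OF assms(1)] by auto
qed



definition Uset :: "nat \<Rightarrow> nat \<Rightarrow> nat \<Rightarrow> nat list set" where
  "Uset k m t = {w \<in> words k m. ub w t}"

lemma B_Uset: "B k m t = card (Uset k m t)"
  unfolding B_def Uset_def by (simp only: ubl_ub)

lemma words_alt: "words k m = {xs. set xs \<subseteq> {..<k} \<and> length xs = m}"
  unfolding words_def by auto

lemma finite_words: "finite (words k m)"
  unfolding words_alt by (simp add: finite_lists_length_eq)

lemma card_words: "card (words k m) = k ^ m"
  unfolding words_alt by (simp add: card_lists_length_eq)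

lemma finite_Uset: "finite (Uset k m t)"
  unfolding Uset_def using finite_words by simp

lemma B_zero: assumes "t < m" "m < 2*t" shows "B k m t = 0"
proof -
  have "Uset k m t = {}"
  proof (rule ccontr)
    assume "Uset k m t \<noteq> {}"
    then obtain w where w: "w \<in> words k m" "ub w t" unfolding Uset_def by auto
    have lw: "length w = m" using w(1) unfolding words_def by simp
    have ht: "hb w t" "\<forall>j. hb w j \<longrightarrow> j = t" using w(2) unfolding ub_def by auto
    have "length w < 2*t" using lw assms by simp
    then have "hb w (2*t - length w)" using hb_overlap[OF ht(1)] by blast
    then have "2*t - length w = t" using ht(2) by blast
    then have "2*t - m = t" using lw by simp
    then show False using assms by simp
  qed
  then show ?thesis using B_Uset by simp
qed

definition Ubd :: "nat \<Rightarrow> nat \<Rightarrow> nat list set" where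
  "Ubd k t = {w \<in> words k t. \<forall>j. \<not> hb w j}"

lemma u_Ubd: "u k t = card (Ubd k t)"
  unfolding u_def Ubd_def by (simp only: unbordered_hb)

definition Sset :: "nat \<Rightarrow> nat \<Rightarrow> nat \<Rightarrow> nat list set" where
  "Sset k n t = {w \<in> words k n. hb w t \<and> (\<forall>j<t. \<not> hb w j)}"

definition Gset :: "nat \<Rightarrow> nat \<Rightarrow> nat \<Rightarrow> nat \<Rightarrow> nat list set" where
  "Gset k n t m = {w \<in> words k n. hb w m \<and> ub (take m w) t}"

lemma hb_vxv: assumes "length v = t" "0 < t" "length (v @ x @ v) = n" "t < n"
  shows "hb (v @ x @ v) t" "take t (v @ x @ v) = v"
  using assms unfolding hb_def by auto

lemma decomp_vxv: assumes "length w = n" "hb w t" "2 * t \<le> n"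
  shows "w = take t w @ take (n - 2*t) (drop t w) @ take t w"
proof -
  have "drop t w = take (n - 2*t) (drop t w) @ drop (n - 2*t) (drop t w)" by (rule append_take_drop_id[symmetric])
  moreover have "drop (n - 2*t) (drop t w) = drop (n - t) w" using assms by (simp add: add.commute)
  moreover have "drop (n - t) w = take t w" using assms unfolding hb_def by simp
  ultimately have "drop t w = take (n - 2*t) (drop t w) @ take t w" by simp
  then show ?thesis by (metis append_take_drop_id)
qed

lemma words_take: "w \<in> words k n \<Longrightarrow> take m w \<in> words k (min m n)"
  unfolding words_def using set_take_subset by fastforce

lemma words_takedrop: "w \<in> words k n \<Longrightarrow> take m (drop j w) \<in> words k (min m (n - j))"
  unfolding words_def using set_take_subset set_drop_subset by fastforce

lemma words_app: "a \<in> words k i \<Longrightarrow> b \<in> words k j \<Longrightarrow> a @ b \<in> words k (i + j)"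
  unfolding words_def by auto

lemma inj_vxv: "inj_on (\<lambda>(v, x). v @ x @ v) (words k t \<times> words k r)"
  unfolding inj_on_def words_def by auto

lemma card_S: assumes "1 \<le> t" "2 * t \<le> n" shows "card (Sset k n t) = u k t * k ^ (n - 2*t)"
proof -
  let ?f = "\<lambda>(v, x). v @ x @ v"
  have "Sset k n t = ?f ` (Ubd k t \<times> words k (n - 2*t))"
  proof (rule set_eqI, rule iffI)
    fix w assume "w \<in> Sset k n t"
    then have w: "w \<in> words k n" "hb w t" "\<forall>j<t. \<not> hb w j" unfolding Sset_def by auto
    have lw: "length w = n" using w(1) unfolding words_def by simp
    have e: "w = take t w @ take (n - 2*t) (drop t w) @ take t w" using decomp_vxv lw w(2) assms by simp
    have "take t w \<in> words k t" using words_take[OF w(1), of t] assms by simp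
    moreover have "\<not> hb (take t w) j" for j using hb_take[OF w(2), of j] w(3) by blast
    ultimately have "take t w \<in> Ubd k t" unfolding Ubd_def by simp
    moreover have "take (n - 2*t) (drop t w) \<in> words k (n - 2*t)"
      using words_takedrop[OF w(1), of "n - 2*t" t] assms by (simp add: min_def split: if_splits)
    ultimately have mem: "(take t w, take (n - 2*t) (drop t w)) \<in> Ubd k t \<times> words k (n - 2*t)" by simp
    have "w = ?f (take t w, take (n - 2*t) (drop t w))" using e by simp
    then show "w \<in> ?f ` (Ubd k t \<times> words k (n - 2*t))" using mem by (rule image_eqI)
  next
    fix w assume "w \<in> ?f ` (Ubd k t \<times> words k (n - 2*t))"
    then obtain v x where vx: "v \<in> Ubd k t" "x \<in> words k (n - 2*t)" "w = v @ x @ v" by auto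
    have lv: "length v = t" "length x = n - 2*t" using vx unfolding Ubd_def words_def by auto
    have wk: "w \<in> words k n" using vx lv assms unfolding Ubd_def words_def by auto
    have ln: "length w = n" using wk unfolding words_def by simp
    have h: "hb w t" "take t w = v" using hb_vxv[of v t x n] lv ln vx(3) assms by auto
    have "\<not> hb w j" if "j < t" for j
    proof
      assume "hb w j"
      then have "hb (take t w) j" using hb_take[OF h(1)] that by simp
      then show False using h(2) vx(1) unfolding Ubd_def by simp
    qed
    then show "w \<in> Sset k n t" unfolding Sset_def using wk h by simp
  qed
  moreover have "inj_on ?f (Ubd k t \<times> words k (n - 2*t))"
    using inj_vxv[of k t "n - 2*t"] unfolding Ubd_def by (rule inj_on_subset) auto
  ultimately have "card (Sset k n t) = card (Ubd k t \<times> words k (n - 2*t))" by (simp add: card_image)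
  also have "\<dots> = u k t * k ^ (n - 2*t)" by (simp add: card_cartesian_product u_Ubd card_words)
  finally show ?thesis .
qed



lemma S_decomp: assumes "t < n" shows "Sset k n t = Uset k n t \<union> (\<Union>m\<in>{t<..<n}. Gset k n t m)"
proof (rule set_eqI, rule iffI)
  fix w assume "w \<in> Sset k n t"
  then have w: "w \<in> words k n" "hb w t" "\<forall>j<t. \<not> hb w j" unfolding Sset_def by auto
  show "w \<in> Uset k n t \<union> (\<Union>m\<in>{t<..<n}. Gset k n t m)"
  proof (cases "\<forall>l. hb w l \<longrightarrow> l = t")
    case True
    have "w \<in> Uset k n t" unfolding Uset_def ub_def using w(1,2) True by blast
    then show ?thesis by blast
  next
    case False
    then obtain l where l: "hb w l" "l \<noteq> t" by auto
    have "\<not> l < t" using w(3) l(1) by blast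
    then have "t < l" using l(2) by simp
    define m where "m = (LEAST l. t < l \<and> hb w l)"
    have m: "t < m" "hb w m" using LeastI[of "\<lambda>l. t < l \<and> hb w l", OF conjI[OF \<open>t < l\<close> l(1)]]
      unfolding m_def by auto
    have mn: "m < n" using m(2) w(1) unfolding hb_def words_def by simp
    have "ub (take m w) t"
      unfolding ub_def
    proof (intro conjI allI impI)
      show "hb (take m w) t" using hb_take[OF m(2), of t] w(2) m(1) by blast
    next
      fix j assume "hb (take m w) j"
      then have j: "hb w j" "j < m" using hb_take[OF m(2), of j] by auto
      have "\<not> j < t" using j w(3) by blast
      moreover have "\<not> t < j" using not_less_Least[of j "\<lambda>l. t < l \<and> hb w l"] j unfolding m_def by blast
      ultimately show "j = t" by simp
    qed
    then have "w \<in> Gset k n t m" using w m unfolding Gset_def by simp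
    moreover have "m \<in> {t<..<n}" using m mn by simp
    ultimately show ?thesis by blast
  qed
next
  fix w assume a: "w \<in> Uset k n t \<union> (\<Union>m\<in>{t<..<n}. Gset k n t m)"
  show "w \<in> Sset k n t"
  proof (cases "w \<in> Uset k n t")
    case True
    then have w: "w \<in> words k n" "hb w t" "\<forall>j. hb w j \<longrightarrow> j = t" unfolding Uset_def ub_def by blast+
    have "\<not> hb w j" if "j < t" for j
    proof
      assume "hb w j"
      then have "j = t" using w(3) by blast
      then show False using that by simp
    qed
    then show ?thesis unfolding Sset_def using w(1,2) by blast
  next
    case False
    then have "w \<in> (\<Union>m\<in>{t<..<n}. Gset k n t m)" using a by (simp only: Un_iff simp_thms)
    then obtain m where m: "m \<in> {t<..<n}" "w \<in> Gset k n t m" by (rule UN_E)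
    then have 2: "t < m" "m < n" "w \<in> Gset k n t m" by simp_all
    then have w: "w \<in> words k n" "hb w m" "hb (take m w) t" "\<forall>j. hb (take m w) j \<longrightarrow> j = t"
      unfolding Gset_def ub_def by blast+
    have ht: "hb w t" using w(3) hb_take[OF w(2), of t] by blast
    have "\<not> hb w j" if "j < t" for j
    proof
      assume "hb w j"
      then have "hb (take m w) j" using hb_take[OF w(2), of j] that 2(1) by simp
      then have "j = t" using w(4) by blast
      then show False using that by simp
    qed
    then show ?thesis unfolding Sset_def using w(1) ht by simp
  qed
qed

lemma disj1: assumes "t < m" shows "Uset k n t \<inter> Gset k n t m = {}"
  using assms unfolding Uset_def Gset_def ub_def by auto

lemma disj2: assumes "t < m" "t < m'" "m \<noteq> m'" shows "Gset k n t m \<inter> Gset k n t m' = {}"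
proof -
  have *: "Gset k n t a \<inter> Gset k n t b = {}" if "t < a" "a < b" for a b
  proof (rule ccontr)
    assume "Gset k n t a \<inter> Gset k n t b \<noteq> {}"
    then obtain w where "w \<in> Gset k n t a" "w \<in> Gset k n t b" by blast
    then have "hb w a" "hb w b" "ub (take b w) t" unfolding Gset_def by auto
    then have "hb (take b w) a" using hb_take that by blast
    then have "a = t" using \<open>ub (take b w) t\<close> unfolding ub_def by blast
    then show False using that by simp
  qed
  show ?thesis using assms *[of m m'] *[of m' m] by (cases "m < m'") (auto simp: Int_commute)
qed

lemma card_G1: assumes "t < m" "2 * m \<le> n" shows "card (Gset k n t m) = B k m t * k ^ (n - 2*m)"
proof -
  let ?f = "\<lambda>(v, x). v @ x @ v"
  have "Gset k n t m = ?f ` (Uset k m t \<times> words k (n - 2*m))"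
  proof (rule set_eqI, rule iffI)
    fix w assume "w \<in> Gset k n t m"
    then have w: "w \<in> words k n" "hb w m" "ub (take m w) t" unfolding Gset_def by auto
    have lw: "length w = n" using w(1) unfolding words_def by simp
    have e: "w = take m w @ take (n - 2*m) (drop m w) @ take m w" using decomp_vxv[OF lw w(2)] assms(2) by simp
    have "take m w \<in> words k m" using words_take[OF w(1), of m] assms by simp
    then have "take m w \<in> Uset k m t" using w(3) unfolding Uset_def by simp
    moreover have "take (n - 2*m) (drop m w) \<in> words k (n - 2*m)"
      using words_takedrop[OF w(1), of "n - 2*m" m] assms by (simp add: min_def split: if_splits)
    ultimately have mem: "(take m w, take (n - 2*m) (drop m w)) \<in> Uset k m t \<times> words k (n - 2*m)" by simp
    have "w = ?f (take m w, take (n - 2*m) (drop m w))" using e by simp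
    then show "w \<in> ?f ` (Uset k m t \<times> words k (n - 2*m))" using mem by (rule image_eqI)
  next
    fix w assume "w \<in> ?f ` (Uset k m t \<times> words k (n - 2*m))"
    then obtain v x where vx: "v \<in> Uset k m t" "x \<in> words k (n - 2*m)" "w = v @ x @ v" by auto
    have lv: "length v = m" "length x = n - 2*m" using vx unfolding Uset_def words_def by auto
    have wk: "w \<in> words k n" using vx lv assms unfolding Uset_def words_def by auto
    have ln: "length w = n" using wk unfolding words_def by simp
    have h: "hb w m" "take m w = v" using hb_vxv[of v m x n] lv ln vx(3) assms by auto
    then show "w \<in> Gset k n t m" unfolding Gset_def using wk vx(1) unfolding Uset_def by simp
  qed
  moreover have "inj_on ?f (Uset k m t \<times> words k (n - 2*m))"
    using inj_vxv[of k m "n - 2*m"] unfolding Uset_def by (rule inj_on_subset) auto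
  ultimately have "card (Gset k n t m) = card (Uset k m t \<times> words k (n - 2*m))" by (simp add: card_image)
  also have "\<dots> = B k m t * k ^ (n - 2*m)" by (simp add: card_cartesian_product B_Uset card_words)
  finally show ?thesis .
qed

lemma card_G2: assumes "t < m" "m < n" "n < 2 * m"
  shows "card (Gset k n t m) = (if 2*m - n = t then B k m t else 0)"
proof (cases "2*m - n = t")
  case False
  have "Gset k n t m = {}"
  proof (rule ccontr)
    assume "Gset k n t m \<noteq> {}"
    then obtain w where w: "w \<in> words k n" "hb w m" "ub (take m w) t" unfolding Gset_def by auto
    have lw: "length w = n" using w(1) unfolding words_def by simp
    have "hb w (2*m - n)" using hb_overlap[OF w(2)] lw assms by simp
    then have "hb (take m w) (2*m - n)" using hb_take[OF w(2)] assms by simp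
    then have "2*m - n = t" using w(3) unfolding ub_def by blast
    then show False using False by simp
  qed
  then show ?thesis using False by simp
next
  case True
  let ?f = "\<lambda>p. take (n - m) p @ p"
  have "Gset k n t m = ?f ` Uset k m t"
  proof (rule set_eqI, rule iffI)
    fix w assume "w \<in> Gset k n t m"
    then have w: "w \<in> words k n" "hb w m" "ub (take m w) t" unfolding Gset_def by auto
    have lw: "length w = n" using w(1) unfolding words_def by simp
    have "take m w \<in> words k m" using words_take[OF w(1), of m] assms by simp
    then have mem: "take m w \<in> Uset k m t" using w(3) unfolding Uset_def by simp
    have A: "take (n - m) (take m w) = take (n - m) w" using assms by simp
    have B: "take m w = drop (n - m) w" using w(2) lw unfolding hb_def by simp
    have "?f (take m w) = take (n - m) w @ drop (n - m) w" using A B by simp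
    then have "w = ?f (take m w)" by simp
    then show "w \<in> ?f ` Uset k m t" using mem by (rule image_eqI)
  next
    fix w assume "w \<in> ?f ` Uset k m t"
    then obtain p where p: "p \<in> Uset k m t" "w = ?f p" by auto
    have lp: "length p = m" using p unfolding Uset_def words_def by simp
    have hp: "hb p t" using p unfolding Uset_def ub_def by simp
    have lw: "length w = n" using p(2) lp assms by simp
    have "set w \<subseteq> set p" using p(2) set_take_subset[of "n - m" p] by auto
    then have wk: "w \<in> words k n" using p(1) lw unfolding Uset_def words_def by auto
    have nm: "n - m = m - t" using True assms by simp
    have dp: "drop (n - m) p = take t p" using hp lp unfolding hb_def nm by simp
    have "take m w = take (n - m) p @ take (m - (n - m)) p" using p(2) lp assms by simp
    also have "m - (n - m) = t" using True assms by simp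
    finally have "take m w = take (n - m) p @ drop (n - m) p" using dp by simp
    then have tw: "take m w = p" by simp
    have "drop (n - m) w = p" using p(2) lp assms by simp
    then have "hb w m" using tw lw assms unfolding hb_def by simp
    then show "w \<in> Gset k n t m" unfolding Gset_def using wk tw p(1) unfolding Uset_def by simp
  qed
  moreover have "inj_on ?f (Uset k m t)"
  proof (rule inj_onI)
    fix p q assume "p \<in> Uset k m t" "q \<in> Uset k m t" "?f p = ?f q"
    moreover have "length p = m" "length q = m" using calculation unfolding Uset_def words_def by auto
    ultimately have "drop (n - m) (?f p) = drop (n - m) (?f q)" by simp
    then show "p = q" using \<open>length p = m\<close> \<open>length q = m\<close> assms by simp
  qed
  ultimately show ?thesis using True by (simp add: card_image B_Uset)
qed



lemma main_nat: assumes "1 \<le> t" "2 * t \<le> n"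
  shows "u k t * k ^ (n - 2*t) = B k n t + (\<Sum>i = 2*t..n div 2. B k i t * k ^ (n - 2*i))
           + (if even (n + t) then B k ((n + t) div 2) t else 0)"
proof -
  have tn: "t < n" using assms by simp
  have finU: "finite (Uset k n t)" by (rule finite_Uset)
  have finG: "finite (Gset k n t m)" for m unfolding Gset_def using finite_words by simp
  have finUN: "finite (\<Union>m\<in>{t<..<n}. Gset k n t m)" using finG by simp
  have dUN: "Uset k n t \<inter> (\<Union>m\<in>{t<..<n}. Gset k n t m) = {}" using disj1 by fastforce
  have c1: "card (Sset k n t) = card (Uset k n t) + card (\<Union>m\<in>{t<..<n}. Gset k n t m)"
    unfolding S_decomp[OF tn] using finU finUN dUN by (rule card_Un_disjoint)
  have c2: "card (\<Union>m\<in>{t<..<n}. Gset k n t m) = (\<Sum>m\<in>{t<..<n}. card (Gset k n t m))"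
  proof (rule card_UN_disjoint)
    show "\<forall>i\<in>{t<..<n}. \<forall>j\<in>{t<..<n}. i \<noteq> j \<longrightarrow> Gset k n t i \<inter> Gset k n t j = {}"
      by (simp add: disj2)
  qed (simp_all add: finG)
  define h1 where "h1 m = (if 2*m \<le> n then B k m t * k ^ (n - 2*m) else 0)" for m
  define h2 where "h2 m = (if 2*m = n + t then B k m t else 0)" for m
  have cg: "card (Gset k n t m) = h1 m + h2 m" if "m \<in> {t<..<n}" for m
  proof (cases "2*m \<le> n")
    case True
    then show ?thesis using card_G1[of t m n k] that assms unfolding h1_def h2_def by simp
  next
    case False
    then have "(2*m - n = t) = (2*m = n + t)" by auto
    then show ?thesis using card_G2[of t m n k] that False unfolding h1_def h2_def by simp
  qed
  have s: "(\<Sum>m\<in>{t<..<n}. card (Gset k n t m)) = (\<Sum>m\<in>{t<..<n}. h1 m) + (\<Sum>m\<in>{t<..<n}. h2 m)"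
    using cg by (simp add: sum.distrib)
  have s1: "(\<Sum>m\<in>{t<..<n}. h1 m) = (\<Sum>i = 2*t..n div 2. B k i t * k ^ (n - 2*i))"
  proof (rule sum.mono_neutral_cong_right)
    show "finite {t<..<n}" by simp
    show "{2*t..n div 2} \<subseteq> {t<..<n}" using assms by auto
    show "\<forall>i\<in>{t<..<n} - {2*t..n div 2}. h1 i = 0"
    proof
      fix i assume "i \<in> {t<..<n} - {2*t..n div 2}"
      then have "t < i" "i < 2*t \<or> n div 2 < i" by auto
      then show "h1 i = 0" unfolding h1_def using B_zero[of t i k] by auto
    qed
    show "h1 x = B k x t * k ^ (n - 2*x)" if "x \<in> {2*t..n div 2}" for x
      using that unfolding h1_def by auto
  qed
  define c where "c = (n + t) div 2"
  have s2: "(\<Sum>m\<in>{t<..<n}. h2 m) = (if even (n + t) then B k c t else 0)"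
  proof -
    have "(\<Sum>m\<in>{t<..<n}. h2 m) = (\<Sum>m\<in>{t<..<n}. if m = c then (if even (n + t) then B k c t else 0) else 0)"
      by (rule sum.cong) (auto simp: h2_def c_def)
    also have "\<dots> = (if c \<in> {t<..<n} then (if even (n + t) then B k c t else 0) else 0)"
      by (rule sum.delta) simp
    also have "\<dots> = (if even (n + t) then B k c t else 0)"
    proof (cases "even (n + t)")
      case True
      then obtain q where q: "n + t = 2*q" by (rule evenE)
      then have "c = q" unfolding c_def by simp
      then have "c \<in> {t<..<n}" using tn q by simp
      then show ?thesis by simp
    qed simp
    finally show ?thesis .
  qed
  have "u k t * k ^ (n - 2*t) = card (Sset k n t)" using card_S assms by simp
  also have "\<dots> = B k n t + (\<Sum>i = 2*t..n div 2. B k i t * k ^ (n - 2*i)) + (if even (n + t) then B k c t else 0)"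
    using c1 c2 s s1 s2 B_Uset by simp
  finally show ?thesis unfolding c_def .
qed

theorem theorem9:
  fixes k n t :: nat
  assumes "k \<ge> 2" and "1 \<le> t" and "t < n"
  shows "int (B k n t) =
    (if n < 2 * t then 0
     else if odd (n + t) then
       int (u k t) * int k ^ (n - 2 * t)
         - (\<Sum>i = 2 * t..n div 2. int (B k i t) * int k ^ (n - 2 * i))
     else
       int (u k t) * int k ^ (n - 2 * t) - int (B k ((n + t) div 2) t)
         - (\<Sum>i = 2 * t..n div 2. int (B k i t) * int k ^ (n - 2 * i)))"
proof (cases "n < 2 * t")
  case True
  then show ?thesis using B_zero[of t n k] assms by simp
next
  case False
  then have le: "2 * t \<le> n" by simp
  have e: "int (u k t * k ^ (n - 2*t)) = int (B k n t) + int (\<Sum>i = 2*t..n div 2. B k i t * k ^ (n - 2*i))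
           + int (if even (n + t) then B k ((n + t) div 2) t else 0)"
    using main_nat[OF assms(2) le, of k] by simp
  have si: "int (\<Sum>i = 2*t..n div 2. B k i t * k ^ (n - 2*i)) = (\<Sum>i = 2 * t..n div 2. int (B k i t) * int k ^ (n - 2 * i))"
    by (simp add: of_nat_sum)
  show ?thesis
  proof (cases "even (n + t)")
    case True
    then show ?thesis using e si False by simp
  next
    case f2: False
    then show ?thesis using e si False by simp
  qed
qed

end
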